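(* Let $\mathcal{F}$ be an argumentation framework and $S\subseteq A_{\mathcal{F}}$. Then $S\in\mathit{tfcf2}(\mathcal{F})$ if and only if $S$ is conflict-free and $S$ is a naive extension of $[[\mathcal{F}\setminus\Delta_{\mathcal{F},S}]]$.
   Context: An argumentation framework (AF) is $\mathcal{F}=(A_{\mathcal{F}},R_{\mathcal{F}})$ with $R_{\mathcal{F}}\subseteq A_{\mathcal{F}}\times A_{\mathcal{F}}$; $a\rightarrow b$ means $(a,b)\in R_{\mathcal{F}}$. $\mathcal{F}|_B=(A_{\mathcal{F}}\cap B,R_{\mathcal{F}}\cap(B\times B))$. Conflict-free: no $a,b\in S$ with $a\rightarrow b$; naive extension: $\subseteq$-maximal conflict-free set. $\mathrm{SCC}(a)$: set of $b$ with directed attack paths (possibly length 0) from $a$ to $b$ and back. $D_S(X)=\{b\in X:\exists a\in S\setminus X,\ a\rightarrow b\}$. $\mathit{tfcf2}$: $C^0_S(a)=\mathrm{SCC}(a)$; $C^{\alpha+1}_S(a)$ = the strongly connected component of $a$ in $\mathcal{F}|_{C^\alpha_S(a)\setminus D_S(C^\alpha_S(a))}$ (empty if $a$ is not in that set); for limit $\lambda$, $C^\lambda_S(a)$ = the component of $a$ in $\mathcal{F}|_{\bigcap_{\alpha<\lambda}C^\alpha_S(a)}$; $\alpha_S(a)$ = least $\alpha$ with $a\notin C^\alpha_S(a)$ or $C^{\alpha+1}_S(a)=C^\alpha_S(a)$. $S\in\mathit{tfcf2}(\mathcal{F})$ iff $S$ is conflict-free and for each $a\in A_{\mathcal{F}}$,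 either $a\notin C^{\alpha_S(a)}_S(a)$ or $S\cap C^{\alpha_S(a)}_S(a)$ is a naive extension of $\mathcal{F}|_{C^{\alpha_S(a)}_S(a)}$. $b$ is reachable from $a$ modulo $B$, written $a\Rightarrow^B_{\mathcal{F}}b$, if there is a directed attack path from $a$ to $b$ in $\mathcal{F}|_B$. For $D\subseteq A_{\mathcal{F}}$, $\Delta_{\mathcal{F},S}(D)=\{a\in A_{\mathcal{F}}:\exists b\in S\,(b\rightarrow a\text{ and not }a\Rightarrow^{A_{\mathcal{F}}\setminus D}_{\mathcal{F}}b)\}$. This operator on subsets of $A_{\mathcal{F}}$ is monotone; $\Delta_{\mathcal{F},S}$ (as a set) denotes its least fixed point. $\mathcal{F}\setminus\Delta$ denotes $\mathcal{F}|_{A_{\mathcal{F}}\setminus\Delta}$. For an AF $\mathcal{G}$, the separation $[[\mathcal{G}]]$ is obtained from $\mathcal{G}$ by deleting all attacks between arguments lying in different strongly connected components of $\mathcal{G}$. *)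

theory Defs
  imports Main
begin

type_synonym 'a AF = "'a set \<times> ('a \<times> 'a) set"

definition args :: "'a AF \<Rightarrow> 'a set" where "args F = fst F"
definition att :: "'a AF \<Rightarrow> ('a \<times> 'a) set" where "att F = snd F"

definition wf_AF :: "'a AF \<Rightarrow> bool" where
  "wf_AF F \<longleftrightarrow> att F \<subseteq> args F \<times> args F"

definition restrict_AF :: "'a AF \<Rightarrow> 'a set \<Rightarrow> 'a AF" where
  "restrict_AF F B = (args F \<inter> B, att F \<inter> (B \<times> B))"

definition conflict_free :: "'a AF \<Rightarrow> 'a set \<Rightarrow> bool" where
  "conflict_free F S \<longleftrightarrow> S \<subseteq> args F \<and> (\<forall>a\<in>S. \<forall>b\<in>S. (a, b) \<notin> att F)"

definition naive :: "'a AF \<Rightarrow> 'a set \<Rightarrow> bool" where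
  "naive F S \<longleftrightarrow> conflict_free F S \<and> (\<forall>T. conflict_free F T \<and> S \<subseteq> T \<longrightarrow> T = S)"

text \<open>Strongly connected component of a in F (empty if a is not an argument of F).\<close>
definition SCC :: "'a AF \<Rightarrow> 'a \<Rightarrow> 'a set" where
  "SCC F a = {b. a \<in> args F \<and> b \<in> args F \<and> (a, b) \<in> (att F)\<^sup>* \<and> (b, a) \<in> (att F)\<^sup>*}"

definition D_set :: "'a AF \<Rightarrow> 'a set \<Rightarrow> 'a set \<Rightarrow> 'a set" where
  "D_set F S X = {b \<in> X. \<exists>a \<in> S - X. (a, b) \<in> att F}"

definition tf_step :: "'a AF \<Rightarrow> 'a set \<Rightarrow> 'a \<Rightarrow> 'a set \<Rightarrow> 'a set" where
  "tf_step F S a X = SCC (restrict_AF F (X - D_set F S X)) a"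

definition tf_limit :: "'a AF \<Rightarrow> 'a \<Rightarrow> 'a set set \<Rightarrow> 'a set" where
  "tf_limit F a K = SCC (restrict_AF F (\<Inter>K)) a"

text \<open>The class of all stages C^alpha_S(a), alpha ranging over all ordinals,
  as the least family closed under the transfinite recursion.\<close>
inductive_set tf_stages :: "'a AF \<Rightarrow> 'a set \<Rightarrow> 'a \<Rightarrow> 'a set set"
  for F :: "'a AF" and S :: "'a set" and a :: 'a where
  base: "SCC F a \<in> tf_stages F S a"
| succ: "X \<in> tf_stages F S a \<Longrightarrow> tf_step F S a X \<in> tf_stages F S a"
| lim: "\<forall>X\<in>K. X \<in> tf_stages F S a \<Longrightarrow> K \<noteq> {} \<Longrightarrow> tf_limit F a K \<in> tf_stages F S a"

text \<open>X is C^{alpha_S(a)}_S(a): the first stage (largest, as stages decrease) at which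
  a has dropped out or the sequence became stationary.\<close>
definition tf_final :: "'a AF \<Rightarrow> 'a set \<Rightarrow> 'a \<Rightarrow> 'a set \<Rightarrow> bool" where
  "tf_final F S a X \<longleftrightarrow> X \<in> tf_stages F S a \<and> (a \<notin> X \<or> tf_step F S a X = X) \<and>
     (\<forall>Y \<in> tf_stages F S a. (a \<notin> Y \<or> tf_step F S a Y = Y) \<longrightarrow> Y \<subseteq> X)"

definition tfcf2 :: "'a AF \<Rightarrow> 'a set \<Rightarrow> bool" where
  "tfcf2 F S \<longleftrightarrow> conflict_free F S \<and>
     (\<forall>a \<in> args F. \<forall>X. tf_final F S a X \<longrightarrow>
        a \<notin> X \<or> naive (restrict_AF F X) (S \<inter> X))"

definition reach_mod :: "'a AF \<Rightarrow> 'a set \<Rightarrow> 'a \<Rightarrow> 'a \<Rightarrow> bool" where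
  "reach_mod F B a b \<longleftrightarrow> a \<in> args (restrict_AF F B) \<and> b \<in> args (restrict_AF F B) \<and>
     (a, b) \<in> (att (restrict_AF F B))\<^sup>*"

definition Delta_op :: "'a AF \<Rightarrow> 'a set \<Rightarrow> 'a set \<Rightarrow> 'a set" where
  "Delta_op F S D = {a \<in> args F. \<exists>b \<in> S. (b, a) \<in> att F \<and> \<not> reach_mod F (args F - D) a b}"

definition Delta :: "'a AF \<Rightarrow> 'a set \<Rightarrow> 'a set" where
  "Delta F S = lfp (Delta_op F S)"

definition separation :: "'a AF \<Rightarrow> 'a AF" where
  "separation G = (args G, {(x, y) \<in> att G. y \<in> SCC G x})"

end

theory Submission
  imports Defs
begin

lemma args_restrict[simp]: "args (restrict_AF F B) = args F \<inter> B"
  by (simp add: restrict_AF_def args_def)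
lemma att_restrict[simp]: "att (restrict_AF F B) = att F \<inter> B \<times> B"
  by (simp add: restrict_AF_def att_def)
lemma args_sep[simp]: "args (separation G) = args G"
  by (simp add: separation_def args_def)
lemma att_sep[simp]: "att (separation G) = {(x, y) \<in> att G. y \<in> SCC G x}"
  by (simp add: separation_def att_def)
lemma restrict_UNIV: "restrict_AF F UNIV = F"
  by (cases F) (simp add: restrict_AF_def args_def att_def)

definition sc :: "('a \<times> 'a) set \<Rightarrow> 'a set \<Rightarrow> 'a \<Rightarrow> bool" where
  "sc E X a \<longleftrightarrow> a \<in> X \<and> (\<forall>y\<in>X. (a,y) \<in> (E \<inter> X \<times> X)\<^sup>* \<and> (y,a) \<in> (E \<inter> X \<times> X)\<^sup>*)"

definition good :: "'a AF \<Rightarrow> 'a set \<Rightarrow> 'a \<Rightarrow> 'a set \<Rightarrow> bool" where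
  "good F S a X \<longleftrightarrow> X \<subseteq> args F \<and> sc (att F) X a \<and> D_set F S X = {}"

lemma path1:
  "(a,y) \<in> E\<^sup>* \<Longrightarrow> (y,a) \<in> E\<^sup>* \<Longrightarrow>
   (a,y) \<in> (E \<inter> {z. (a,z) \<in> E\<^sup>* \<and> (z,a) \<in> E\<^sup>*} \<times> {z. (a,z) \<in> E\<^sup>* \<and> (z,a) \<in> E\<^sup>*})\<^sup>*"
proof (induction rule: rtrancl_induct)
  case base
  then show ?case by simp
next
  case (step y z)
  have "(y,a) \<in> E\<^sup>*" using step by (meson converse_rtrancl_into_rtrancl)
  then have IH: "(a,y) \<in> (E \<inter> {z. (a,z) \<in> E\<^sup>* \<and> (z,a) \<in> E\<^sup>*} \<times> {z. (a,z) \<in> E\<^sup>* \<and> (z,a) \<in> E\<^sup>*})\<^sup>*"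
    using step by blast
  have "(a,z) \<in> E\<^sup>*" using step by (meson rtrancl_into_rtrancl)
  have e: "(y,z) \<in> E \<inter> {z. (a,z) \<in> E\<^sup>* \<and> (z,a) \<in> E\<^sup>*} \<times> {z. (a,z) \<in> E\<^sup>* \<and> (z,a) \<in> E\<^sup>*}"
    using step \<open>(y,a) \<in> E\<^sup>*\<close> \<open>(a,z) \<in> E\<^sup>*\<close> by blast
  show ?case by (rule rtrancl_into_rtrancl[OF IH e])
qed

lemma path2:
  "(y,a) \<in> E\<^sup>* \<Longrightarrow> (a,y) \<in> E\<^sup>* \<longrightarrow>
   (y,a) \<in> (E \<inter> {z. (a,z) \<in> E\<^sup>* \<and> (z,a) \<in> E\<^sup>*} \<times> {z. (a,z) \<in> E\<^sup>* \<and> (z,a) \<in> E\<^sup>*})\<^sup>*"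
proof (induction rule: converse_rtrancl_induct)
  case base
  then show ?case by simp
next
  case (step y z)
  show ?case
  proof
    assume ay: "(a,y) \<in> E\<^sup>*"
    have az: "(a,z) \<in> E\<^sup>*" using ay step(1) by (meson rtrancl_into_rtrancl)
    have IH: "(z,a) \<in> (E \<inter> {z. (a,z) \<in> E\<^sup>* \<and> (z,a) \<in> E\<^sup>*} \<times> {z. (a,z) \<in> E\<^sup>* \<and> (z,a) \<in> E\<^sup>*})\<^sup>*"
      using step(3) az by blast
    have ya: "(y,a) \<in> E\<^sup>*" using step(1,2) by (meson converse_rtrancl_into_rtrancl)
    have e: "(y,z) \<in> E \<inter> {z. (a,z) \<in> E\<^sup>* \<and> (z,a) \<in> E\<^sup>*} \<times> {z. (a,z) \<in> E\<^sup>* \<and> (z,a) \<in> E\<^sup>*}"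
      using step(1,2) ya ay az by blast
    show "(y,a) \<in> (E \<inter> {z. (a,z) \<in> E\<^sup>* \<and> (z,a) \<in> E\<^sup>*} \<times> {z. (a,z) \<in> E\<^sup>* \<and> (z,a) \<in> E\<^sup>*})\<^sup>*"
      by (rule converse_rtrancl_into_rtrancl[OF e IH])
  qed
qed

lemma SCC_sc:
  assumes wf: "wf_AF F" and a: "a \<in> SCC (restrict_AF F B) a"
  shows "sc (att F) (SCC (restrict_AF F B) a) a"
proof -
  let ?E = "att F \<inter> B \<times> B"
  let ?C = "SCC (restrict_AF F B) a"
  let ?C' = "{z. (a,z) \<in> ?E\<^sup>* \<and> (z,a) \<in> ?E\<^sup>*}"
  have C: "?C = {b. a \<in> args F \<inter> B \<and> b \<in> args F \<inter> B \<and> (a,b) \<in> ?E\<^sup>* \<and> (b,a) \<in> ?E\<^sup>*}"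
    by (simp add: SCC_def)
  have aA: "a \<in> args F \<inter> B" using a C by blast
  have sub: "?E \<inter> ?C' \<times> ?C' \<subseteq> att F \<inter> ?C \<times> ?C"
    using wf aA unfolding wf_AF_def C by blast
  have "\<forall>y\<in>?C. (a, y) \<in> (att F \<inter> ?C \<times> ?C)\<^sup>* \<and> (y, a) \<in> (att F \<inter> ?C \<times> ?C)\<^sup>*"
  proof
    fix y assume "y \<in> ?C"
    then have "(a,y) \<in> ?E\<^sup>*" "(y,a) \<in> ?E\<^sup>*" using C by blast+
    then show "(a, y) \<in> (att F \<inter> ?C \<times> ?C)\<^sup>* \<and> (y, a) \<in> (att F \<inter> ?C \<times> ?C)\<^sup>*"
      using path1[of a y ?E] path2[of y a ?E] rtrancl_mono[OF sub] by blast
  qed  then show ?thesis unfolding sc_def using a by blast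
qed

lemma sc_sub_SCC:
  assumes "X \<subseteq> args F \<inter> B" "sc (att F) X a"
  shows "X \<subseteq> SCC (restrict_AF F B) a"
proof
  fix y assume y: "y \<in> X"
  have sub: "att F \<inter> X \<times> X \<subseteq> att F \<inter> B \<times> B" using assms(1) by blast
  have "a \<in> X" using assms(2) sc_def by metis
  then show "y \<in> SCC (restrict_AF F B) a"
    using y assms rtrancl_mono[OF sub] unfolding SCC_def sc_def by auto
qed

lemma SCC_sub: "SCC (restrict_AF F B) a \<subseteq> B"
  by (auto simp: SCC_def)

lemma SCC_empty: "a \<notin> SCC H a \<Longrightarrow> SCC H a = {}"
  by (auto simp: SCC_def)

lemma SCC_args: "SCC H a \<subseteq> args H"
  unfolding SCC_def by blast

lemma SCC_sym: "b \<in> SCC H a \<Longrightarrow> a \<in> SCC H b"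
  by (auto simp: SCC_def)

lemma SCC_trans: "b \<in> SCC H a \<Longrightarrow> c \<in> SCC H b \<Longrightarrow> c \<in> SCC H a"
  unfolding SCC_def by (auto intro: rtrancl_trans)

lemma stage_form:
  "Y \<in> tf_stages F S a \<Longrightarrow> \<exists>B. Y = SCC (restrict_AF F B) a"
proof (induction rule: tf_stages.induct)
  case base
  then show ?case by (metis restrict_UNIV)
next
  case (succ X)
  then show ?case unfolding tf_step_def by blast
next
  case (lim K)
  then show ?case unfolding tf_limit_def by blast
qed

lemma good_sub_stage:
  assumes wf: "wf_AF F" and g: "good F S a X" and Y: "Y \<in> tf_stages F S a"
  shows "X \<subseteq> Y"
  using Y
proof (induction rule: tf_stages.induct)
  case base
  have "X \<subseteq> SCC (restrict_AF F UNIV) a"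
    using g by (intro sc_sub_SCC) (auto simp: good_def)
  then show ?case by (simp add: restrict_UNIV)
next
  case (succ Y)
  have "X \<subseteq> Y - D_set F S Y"
    using succ.IH g unfolding good_def D_set_def by blast
  then show ?case unfolding tf_step_def
    using g by (intro sc_sub_SCC) (auto simp: good_def)
next
  case (lim K)
  have "X \<subseteq> \<Inter>K" using lim by blast
  then show ?case unfolding tf_limit_def
    using g by (intro sc_sub_SCC) (auto simp: good_def)
qed

lemma stage_fix_good:
  assumes wf: "wf_AF F" and Y: "Y \<in> tf_stages F S a" and a: "a \<in> Y"
    and fx: "tf_step F S a Y = Y"
  shows "good F S a Y"
proof -
  obtain B where B: "Y = SCC (restrict_AF F B) a" using stage_form[OF Y] by blast
  have "sc (att F) Y a" using SCC_sc[OF wf] a B by simp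
  moreover have "Y \<subseteq> args F" using B by (auto simp: SCC_def)
  moreover have "Y \<subseteq> Y - D_set F S Y" using fx SCC_sub unfolding tf_step_def by metis
  then have "D_set F S Y = {}" unfolding D_set_def by blast
  ultimately show ?thesis by (simp add: good_def)
qed

lemma final_exists:
  assumes wf: "wf_AF F"
  shows "\<exists>X. tf_final F S a X"
proof -
  let ?K = "tf_stages F S a"
  let ?Z = "tf_limit F a ?K"
  have ne: "?K \<noteq> {}" by (metis empty_iff tf_stages.base)
  have Z: "?Z \<in> ?K" by (rule tf_stages.lim[OF _ ne]) simp
  have Zsub: "?Z \<subseteq> \<Inter>?K" unfolding tf_limit_def by (rule SCC_sub)
  have sZ: "tf_step F S a ?Z \<in> ?K" using tf_stages.succ[OF Z] .
  have "tf_step F S a ?Z \<subseteq> ?Z" unfolding tf_step_def using SCC_sub[of F "?Z - D_set F S ?Z" a] by blast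
  moreover have "?Z \<subseteq> tf_step F S a ?Z" using Zsub sZ by blast
  ultimately have fxZ: "tf_step F S a ?Z = ?Z" by blast
  have "\<forall>Y \<in> ?K. (a \<notin> Y \<or> tf_step F S a Y = Y) \<longrightarrow> Y \<subseteq> ?Z"
  proof (intro ballI impI)
    fix Y assume Y: "Y \<in> ?K" and st: "a \<notin> Y \<or> tf_step F S a Y = Y"
    show "Y \<subseteq> ?Z"
    proof (cases "a \<in> Y")
      case False
      obtain B where B: "Y = SCC (restrict_AF F B) a" using stage_form[OF Y] by blast
      then show ?thesis using SCC_empty[of a "restrict_AF F B"] False by simp
    next
      case True
      have "tf_step F S a Y = Y" using st True by blast
      then have g: "good F S a Y" using stage_fix_good[OF wf Y True] by blast
      then have "Y \<subseteq> \<Inter>?K" using good_sub_stage[OF wf g] by blast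
      then show ?thesis unfolding tf_limit_def using g
        by (intro sc_sub_SCC) (auto simp: good_def)
    qed
  qed
  then have "tf_final F S a ?Z" unfolding tf_final_def using Z fxZ by blast
  then show ?thesis by blast
qed

lemma sc_shift:
  assumes h: "sc E X a" and y: "y \<in> X"
  shows "sc E X y"
proof -
  have ay: "(a,y) \<in> (E \<inter> X \<times> X)\<^sup>*" and ya: "(y,a) \<in> (E \<inter> X \<times> X)\<^sup>*"
    using h y unfolding sc_def by blast+
  have "\<forall>z\<in>X. (y,z) \<in> (E \<inter> X \<times> X)\<^sup>* \<and> (z,y) \<in> (E \<inter> X \<times> X)\<^sup>*"
  proof
    fix z assume z: "z \<in> X"
    have az: "(a,z) \<in> (E \<inter> X \<times> X)\<^sup>*" and za: "(z,a) \<in> (E \<inter> X \<times> X)\<^sup>*"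
      using h z unfolding sc_def by blast+
    show "(y,z) \<in> (E \<inter> X \<times> X)\<^sup>* \<and> (z,y) \<in> (E \<inter> X \<times> X)\<^sup>*"
      using rtrancl_trans[OF ya az] rtrancl_trans[OF za ay] by blast
  qed
  then show ?thesis using y unfolding sc_def by blast
qed

lemma good_shift: "good F S a X \<Longrightarrow> y \<in> X \<Longrightarrow> good F S y X"
  unfolding good_def using sc_shift[of "att F" X a y] by simp

lemma reach_mono: "D \<subseteq> D' \<Longrightarrow> reach_mod F (args F - D') x b \<Longrightarrow> reach_mod F (args F - D) x b"
proof -
  assume d: "D \<subseteq> D'" and r: "reach_mod F (args F - D') x b"
  have sub: "att F \<inter> (args F - D') \<times> (args F - D') \<subseteq> att F \<inter> (args F - D) \<times> (args F - D)"
    using d by blast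
  have "(x,b) \<in> (att F \<inter> (args F - D') \<times> (args F - D'))\<^sup>*" using r unfolding reach_mod_def by simp
  then have "(x,b) \<in> (att F \<inter> (args F - D) \<times> (args F - D))\<^sup>*" using rtrancl_mono[OF sub] by blast
  then show ?thesis using r d unfolding reach_mod_def by auto
qed

lemma mono_Delta_op: "mono (Delta_op F S)"
proof (rule monoI)
  fix D D' :: "'a set" assume d: "D \<subseteq> D'"
  show "Delta_op F S D \<subseteq> Delta_op F S D'"
  proof
    fix x assume "x \<in> Delta_op F S D"
    then obtain b where x: "x \<in> args F" "b \<in> S" "(b,x) \<in> att F"
      and nr: "\<not> reach_mod F (args F - D) x b" unfolding Delta_op_def by blast
    have "\<not> reach_mod F (args F - D') x b" using nr reach_mono[OF d] by blast
    then show "x \<in> Delta_op F S D'" using x unfolding Delta_op_def by blast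
  qed
qed

lemma Delta_fp: "Delta F S = Delta_op F S (Delta F S)"
  unfolding Delta_def using lfp_unfold[OF mono_Delta_op] .

lemma good_Delta:
  assumes wf: "wf_AF F" and g: "good F S a X"
  shows "X \<inter> Delta F S = {}"
proof -
  define D0 where "D0 = args F - {y. \<exists>X. good F S y X \<and> y \<in> X}"
  have "Delta_op F S D0 \<subseteq> D0"
  proof
    fix x assume "x \<in> Delta_op F S D0"
    then obtain b where x: "x \<in> args F" and b: "b \<in> S" "(b,x) \<in> att F"
      and nr: "\<not> reach_mod F (args F - D0) x b" unfolding Delta_op_def by blast
    show "x \<in> D0"
    proof (rule ccontr)
      assume "x \<notin> D0"
      then obtain X where gx: "good F S x X" "x \<in> X" using x D0_def by blast
      have bX: "b \<in> X" using gx b unfolding good_def D_set_def by blast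
      have XA: "X \<subseteq> args F - D0"
      proof
        fix y assume y: "y \<in> X"
        have gy: "good F S y X" by (rule good_shift[OF gx(1) y])
        then have "y \<in> args F" using y unfolding good_def by blast
        then show "y \<in> args F - D0" using gy y unfolding D0_def by blast
      qed
      have "sc (att F) X x" using gx(1) unfolding good_def by blast
      then have "(x,b) \<in> (att F \<inter> X \<times> X)\<^sup>*" using bX unfolding sc_def by blast
      moreover have "att F \<inter> X \<times> X \<subseteq> att F \<inter> (args F - D0) \<times> (args F - D0)" using XA by blast
      ultimately have "(x,b) \<in> (att F \<inter> (args F - D0) \<times> (args F - D0))\<^sup>*" using rtrancl_mono by blast
      then have "reach_mod F (args F - D0) x b" unfolding reach_mod_def using XA gx bX by auto
      then show False using nr by blast
    qed
  qed
  then have DD: "Delta F S \<subseteq> D0" unfolding Delta_def by (rule lfp_lowerbound)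
  have "\<forall>y\<in>X. y \<notin> Delta F S"
  proof
    fix y assume y: "y \<in> X"
    have "good F S y X" by (rule good_shift[OF g y])
    then show "y \<notin> Delta F S" using y DD unfolding D0_def by blast
  qed
  then show ?thesis by blast
qed

lemma good_sub_C:
  assumes wf: "wf_AF F" and g: "good F S a X"
  shows "X \<subseteq> SCC (restrict_AF F (args F - Delta F S)) a"
proof -
  have "X \<subseteq> args F \<inter> (args F - Delta F S)" using good_Delta[OF wf g] g unfolding good_def by blast
  moreover have "sc (att F) X a" using g unfolding good_def by blast
  ultimately show ?thesis by (rule sc_sub_SCC)
qed

lemma C_good:
  assumes wf: "wf_AF F" and a: "a \<in> args F" "a \<notin> Delta F S"
  shows "good F S a (SCC (restrict_AF F (args F - Delta F S)) a)"
proof -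
  let ?B = "args F - Delta F S"
  let ?E = "att F \<inter> ?B \<times> ?B"
  let ?C = "SCC (restrict_AF F ?B) a"
  have C: "?C = {b. a \<in> args F \<inter> ?B \<and> b \<in> args F \<inter> ?B \<and> (a,b) \<in> ?E\<^sup>* \<and> (b,a) \<in> ?E\<^sup>*}"
    by (simp add: SCC_def)
  have aC: "a \<in> ?C" using C a by blast
  have "D_set F S ?C = {}"
  proof (rule ccontr)
    assume "D_set F S ?C \<noteq> {}"
    then obtain y c where y: "y \<in> ?C" and c: "c \<in> S" "c \<notin> ?C" "(c,y) \<in> att F"
      unfolding D_set_def by blast
    have yB: "y \<in> args F" "y \<notin> Delta F S" using y C by auto
    then have "y \<notin> Delta_op F S (Delta F S)" using Delta_fp by metis
    then have r: "reach_mod F ?B y c" using yB c unfolding Delta_op_def by blast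
    then have cB: "c \<in> args F \<inter> ?B" "(y,c) \<in> ?E\<^sup>*" unfolding reach_mod_def by auto
    have ce: "(c,y) \<in> ?E" using c cB yB by blast
    have ay: "(a,y) \<in> ?E\<^sup>*" and ya: "(y,a) \<in> ?E\<^sup>*" using y C by blast+
    have ac: "(a,c) \<in> ?E\<^sup>*" by (rule rtrancl_trans[OF ay cB(2)])
    have ca: "(c,a) \<in> ?E\<^sup>*" by (rule converse_rtrancl_into_rtrancl[OF ce ya])
    have aB: "a \<in> args F \<inter> ?B" using a by blast
    have "c \<in> {b. a \<in> args F \<inter> ?B \<and> b \<in> args F \<inter> ?B \<and> (a,b) \<in> ?E\<^sup>* \<and> (b,a) \<in> ?E\<^sup>*}"
      using ac ca cB(1) aB by blast
    then have "c \<in> ?C" using C by simp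
    then show False using c by blast
  qed
  moreover have "?C \<subseteq> args F" by (auto simp: SCC_def)
  ultimately show ?thesis using SCC_sc[OF wf aC] by (simp add: good_def)
qed

lemma final_sub: "tf_final F S a X \<Longrightarrow> X \<in> tf_stages F S a \<and> (a \<notin> X \<or> tf_step F S a X = X)"
  unfolding tf_final_def by blast

theorem theorem8:
  fixes F :: "'a AF" and S :: "'a set"
  assumes "wf_AF F" and "S \<subseteq> args F"
  shows "tfcf2 F S \<longleftrightarrow>
    conflict_free F S \<and> naive (separation (restrict_AF F (args F - Delta F S))) S"
proof -
  note wf = assms(1)
  define G where "G = restrict_AF F (args F - Delta F S)"
  have argsG: "args G = args F - Delta F S" by (auto simp: G_def)
  have attG: "att G = att F \<inter> (args F - Delta F S) \<times> (args F - Delta F S)" by (simp add: G_def)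
  have XC: "X = SCC G a \<and> a \<notin> Delta F S" if f: "tf_final F S a X" and aX: "a \<in> X" for a X
  proof -
    have g: "good F S a X" using final_sub[OF f] aX stage_fix_good[OF wf] by blast
    have nd: "a \<notin> Delta F S" using good_Delta[OF wf g] aX by blast
    have aA: "a \<in> args F" using g aX by (auto simp: good_def)
    have "X \<subseteq> SCC G a" using good_sub_C[OF wf g] G_def by simp
    moreover have "SCC G a \<subseteq> X"
      unfolding G_def using good_sub_stage[OF wf C_good[OF wf aA nd]] final_sub[OF f] by blast
    ultimately show ?thesis using nd by blast
  qed
  have ex: "\<exists>X. tf_final F S a X \<and> a \<in> X \<and> X = SCC G a"
    if a: "a \<in> args F" "a \<notin> Delta F S" for a
  proof -
    obtain X where f: "tf_final F S a X" using final_exists[OF wf] by blast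
    have "SCC G a \<subseteq> X"
      unfolding G_def using good_sub_stage[OF wf C_good[OF wf a]] final_sub[OF f] by blast
    moreover have "a \<in> SCC G a" using a by (simp add: G_def SCC_def)
    ultimately show ?thesis using f XC[OF f] by blast
  qed
  have SD: "S \<inter> Delta F S = {}" if cf: "conflict_free F S"
  proof -
    have "\<forall>x \<in> Delta F S. \<exists>b\<in>S. (b,x) \<in> att F"
    proof
      fix x assume "x \<in> Delta F S"
      then have "x \<in> Delta_op F S (Delta F S)" using Delta_fp by metis
      then show "\<exists>b\<in>S. (b,x) \<in> att F" unfolding Delta_op_def by blast
    qed
    then show ?thesis using cf unfolding conflict_free_def by blast
  qed
  show ?thesis
  proof
    assume t: "tfcf2 F S"
    then have cf: "conflict_free F S" by (simp add: tfcf2_def)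
    have "naive (separation G) S"
      unfolding naive_def
    proof (intro conjI allI impI)
      show "conflict_free (separation G) S"
        using cf SD[OF cf] argsG attG unfolding conflict_free_def by auto
    next
      fix T assume T: "conflict_free (separation G) T \<and> S \<subseteq> T"
      show "T = S"
      proof (rule ccontr)
        assume "T \<noteq> S"
        then obtain x where xT: "x \<in> T" "x \<notin> S" using T by blast
        then have xA: "x \<in> args F" "x \<notin> Delta F S" using T argsG unfolding conflict_free_def by auto
        obtain X where f: "tf_final F S x X" and xX: "x \<in> X" and XG: "X = SCC G x" using ex[OF xA] by blast
        have nv: "naive (restrict_AF F X) (S \<inter> X)" using t xA f xX unfolding tfcf2_def by blast
        have XB: "X \<subseteq> args F - Delta F S" using XG SCC_args[of G x] argsG by simp
        have "conflict_free (restrict_AF F X) (insert x (S \<inter> X))"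
          unfolding conflict_free_def
        proof (intro conjI ballI)
          show "insert x (S \<inter> X) \<subseteq> args (restrict_AF F X)" using xX xA assms(2) by auto
        next
          fix u v assume u: "u \<in> insert x (S \<inter> X)" and v: "v \<in> insert x (S \<inter> X)"
          show "(u, v) \<notin> att (restrict_AF F X)"
          proof
            assume uv: "(u, v) \<in> att (restrict_AF F X)"
            have "u \<in> SCC G x" "v \<in> SCC G x" using u v xX XG by auto
            then have "v \<in> SCC G u" using SCC_sym SCC_trans by metis
            moreover have "(u,v) \<in> att G" using uv XB attG by auto
            moreover have "u \<in> T" "v \<in> T" using u v xT T by auto
            ultimately show False using T unfolding conflict_free_def by auto
          qed
        qed
        then have "insert x (S \<inter> X) = S \<inter> X" using nv unfolding naive_def by blast
        then show False using xT by blast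
      qed
    qed
    then show "conflict_free F S \<and> naive (separation (restrict_AF F (args F - Delta F S))) S"
      using cf G_def by simp
  next
    assume r: "conflict_free F S \<and> naive (separation (restrict_AF F (args F - Delta F S))) S"
    then have cf: "conflict_free F S" and nv: "naive (separation G) S" using G_def by auto
    show "tfcf2 F S"
      unfolding tfcf2_def
    proof (intro conjI ballI allI impI)
      show "conflict_free F S" by fact
    next
      fix a X assume aA: "a \<in> args F" and f: "tf_final F S a X"
      show "a \<notin> X \<or> naive (restrict_AF F X) (S \<inter> X)"
      proof (cases "a \<in> X")
        case False then show ?thesis by blast
      next
        case True
        have XG: "X = SCC G a" using XC[OF f True] by blast
        have XB: "X \<subseteq> args F - Delta F S" using XG SCC_args[of G a] argsG by simp
        have "naive (restrict_AF F X) (S \<inter> X)"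
          unfolding naive_def
        proof (intro conjI allI impI)
          show "conflict_free (restrict_AF F X) (S \<inter> X)"
            using cf unfolding conflict_free_def by auto
        next
          fix T assume T: "conflict_free (restrict_AF F X) T \<and> S \<inter> X \<subseteq> T"
          have TX: "T \<subseteq> X" using T unfolding conflict_free_def by auto
          have "conflict_free (separation G) (S \<union> T)"
            unfolding conflict_free_def
          proof (intro conjI ballI)
            show "S \<union> T \<subseteq> args (separation G)"
              using SD[OF cf] assms(2) TX XB argsG by auto
          next
            fix u v assume u: "u \<in> S \<union> T" and v: "v \<in> S \<union> T"
            show "(u, v) \<notin> att (separation G)"
            proof
              assume uv: "(u, v) \<in> att (separation G)"
              then have vu: "v \<in> SCC G u" and R: "(u,v) \<in> att F" using attG by auto
              have uvX1: "v \<in> X" if "u \<in> X"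
                using SCC_trans[of u G a v] that vu XG by simp
              have uvX2: "u \<in> X" if "v \<in> X"
                using SCC_trans[of v G a u] SCC_sym[OF vu] that XG by simp
              have uvX: "u \<in> X \<longleftrightarrow> v \<in> X" using uvX1 uvX2 by blast
              show False
              proof (cases "u \<in> X")
                case True
                then have "v \<in> X" using uvX by blast
                then have "u \<in> T" "v \<in> T" using u v \<open>u \<in> X\<close> T by blast+
                moreover have "(u,v) \<in> att F \<inter> X \<times> X" using R True uvX by blast
                ultimately show False using T unfolding conflict_free_def att_restrict by blast
              next
                case False
                then have "v \<notin> X" using uvX by blast
                then have "u \<in> S" "v \<in> S" using u v \<open>u \<notin> X\<close> TX by blast+
                then show False using cf R unfolding conflict_free_def by blast
              qed
            qed
          qed
          then have "S \<union> T = S" using nv unfolding naive_def by blast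
          then show "T = S \<inter> X" using T TX by blast
        qed
        then show ?thesis by blast
      qed
    qed
  qed
qed

end
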